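(* For every simple game $v$ on $n\ge 2$ players and every player $i$ that is not a dictator in $v$, we have $\mathrm{Js}_i(v)\le\frac{2^{n-1}-1}{2^{n-1}}$.
   Context: A simple game on $N=\{1,\dots,n\}$ is a surjective, monotone map $v\colon 2^N\to\{0,1\}$. Player $j$ is a null player if $v(S)=v(S\cup\{j\})$ for all $S\subseteq N\setminus\{j\}$; player $i$ is a dictator if $v(\{i\})=1$ and all other players are null players. Johnston index: for a winning coalition $T$ (i.e. $v(T)=1$), a player $j\in T$ is critical in $T$ if $v(T\setminus\{j\})=0$; let $\psi'_j(v)=\sum_{T\ni j,\ j\text{ critical in }T}\frac{1}{c(T)}$, where $c(T)$ is the number of players critical in $T$; then $\mathrm{Js}_i(v)=\psi'_i(v)/\sum_{j\in N}\psi'_j(v)$. *)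

theory Defs
  imports Complex_Main
begin

text \<open>Players are N = {1..n}. A simple game is a map v from subsets of N to {0,1}
  (values outside Pow N are irrelevant), surjective onto {0,1} and monotone.\<close>

definition players :: "nat \<Rightarrow> nat set" where
  "players n = {1..n}"

definition simple_game :: "nat \<Rightarrow> (nat set \<Rightarrow> nat) \<Rightarrow> bool" where
  "simple_game n v \<longleftrightarrow>
     (\<forall>S. S \<subseteq> players n \<longrightarrow> v S \<in> {0, 1}) \<and>
     (\<exists>S. S \<subseteq> players n \<and> v S = 0) \<and>
     (\<exists>S. S \<subseteq> players n \<and> v S = 1) \<and>
     (\<forall>S T. S \<subseteq> T \<and> T \<subseteq> players n \<longrightarrow> v S \<le> v T)"

definition null_player :: "nat \<Rightarrow> (nat set \<Rightarrow> nat) \<Rightarrow> nat \<Rightarrow> bool" where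
  "null_player n v j \<longleftrightarrow> (\<forall>S. S \<subseteq> players n - {j} \<longrightarrow> v S = v (S \<union> {j}))"

definition dictator :: "nat \<Rightarrow> (nat set \<Rightarrow> nat) \<Rightarrow> nat \<Rightarrow> bool" where
  "dictator n v i \<longleftrightarrow> v {i} = 1 \<and> (\<forall>j \<in> players n - {i}. null_player n v j)"

definition critical :: "(nat set \<Rightarrow> nat) \<Rightarrow> nat set \<Rightarrow> nat \<Rightarrow> bool" where
  "critical v T j \<longleftrightarrow> j \<in> T \<and> v T = 1 \<and> v (T - {j}) = 0"

definition num_critical :: "(nat set \<Rightarrow> nat) \<Rightarrow> nat set \<Rightarrow> nat" where
  "num_critical v T = card {j \<in> T. critical v T j}"

definition johnston_raw :: "nat \<Rightarrow> (nat set \<Rightarrow> nat) \<Rightarrow> nat \<Rightarrow> real" where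
  "johnston_raw n v j =
     (\<Sum>T \<in> {T. T \<subseteq> players n \<and> critical v T j}. 1 / real (num_critical v T))"

definition johnston :: "nat \<Rightarrow> (nat set \<Rightarrow> nat) \<Rightarrow> nat \<Rightarrow> real" where
  "johnston n v i = johnston_raw n v i / (\<Sum>j \<in> players n. johnston_raw n v j)"

end

theory Submission
  imports Defs
begin

lemma minimal_winning:
  assumes "finite S" "v S = (1::nat)" "\<And>X. X \<subseteq> S \<Longrightarrow> v X \<in> {0,1}"
  shows "\<exists>W. W \<subseteq> S \<and> v W = 1 \<and> (\<forall>j\<in>W. v (W - {j}) = 0)"
proof -
  obtain W where W: "W \<subseteq> S \<and> v W = 1" and mn: "\<forall>Y. Y \<subseteq> S \<and> v Y = 1 \<longrightarrow> card W \<le> card Y"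
    using ex_has_least_nat[of "\<lambda>W. W \<subseteq> S \<and> v W = 1" S card] assms by blast
  have "v (W - {j}) = 0" if "j \<in> W" for j
  proof -
    have fW: "finite W" using W assms(1) finite_subset by blast
    have "card (W - {j}) < card W" using fW that by (meson card_Diff1_less)
    moreover have "W - {j} \<subseteq> S" using W by blast
    ultimately have "v (W - {j}) \<noteq> 1" using mn by (meson not_le)
    moreover have "v (W - {j}) \<in> {0,1}" using assms(3) W by blast
    ultimately show ?thesis by auto
  qed
  thus ?thesis using W by blast
qed

lemma half_bound: "(2::nat) \<le> k \<Longrightarrow> 1 / real k \<le> 1 / 2"
  by (rule divide_left_mono) auto

lemma card2:
  assumes "finite W" "i \<in> W" "W \<noteq> {i}"
  shows "card W \<ge> 2"
proof -
  obtain k where k: "k \<in> W" "k \<noteq> i" using assms by blast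
  have "{i, k} \<subseteq> W" using k assms by auto
  hence "card {i, k} \<le> card W" using assms(1) by (rule card_mono[rotated])
  thus ?thesis using k by simp
qed

theorem theorem3:
  fixes n :: nat and v :: "nat set \<Rightarrow> nat" and i :: nat
  assumes "n \<ge> 2"
    and "simple_game n v"
    and "i \<in> players n"
    and "\<not> dictator n v i"
  shows "johnston n v i \<le> (2 ^ (n - 1) - 1) / 2 ^ (n - 1)"
proof -
  define N where "N = players n"
  have fN: "finite N" and cN: "card N = n" unfolding N_def players_def by auto
  have iN: "i \<in> N" using assms(3) N_def by simp
  have val: "\<And>S. S \<subseteq> N \<Longrightarrow> v S \<in> {0,1}" using assms(2) unfolding simple_game_def N_def by blast
  have mono: "\<And>S T. S \<subseteq> T \<Longrightarrow> T \<subseteq> N \<Longrightarrow> v S \<le> v T" using assms(2) unfolding simple_game_def N_def by blast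
  obtain S0 where S0: "S0 \<subseteq> N" "v S0 = 0" using assms(2) unfolding simple_game_def N_def by blast
  obtain S1 where S1: "S1 \<subseteq> N" "v S1 = 1" using assms(2) unfolding simple_game_def N_def by blast
  have v0: "v {} = 0" using mono[of "{}" S0] S0 by auto
  have vN: "v N = 1" using mono[of S1 N] S1 val[of N] by auto
  define C where "C T = real (num_critical v T)" for T
  define a where "a T = (if critical v T i then 1 / C T else 0)" for T
  define r where "r T = (\<Sum>j\<in>N-{i}. if critical v T j then 1 / C T else 0)" for T
  define M :: real where "M = 2 ^ (n - 1)"
  have M2: "M \<ge> 2"
  proof -
    have "(2::real)^1 \<le> 2^(n-1)" by (rule power_increasing) (use assms(1) in auto)
    thus ?thesis unfolding M_def by simp
  qed
  have raw: "johnston_raw n v j = (\<Sum>T\<in>Pow N. if critical v T j then 1 / C T else 0)" for j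
  proof -
    have "{T. T \<subseteq> players n \<and> critical v T j} = {T \<in> Pow N. critical v T j}" unfolding N_def by auto
    thus ?thesis unfolding johnston_raw_def C_def
      using sum.inter_filter[of "Pow N" "\<lambda>T. 1 / real (num_critical v T)" "\<lambda>T. critical v T j"] fN
      by (simp only: finite_Pow_iff)
  qed
  have tot: "(\<Sum>j\<in>N. johnston_raw n v j) = sum a (Pow N) + sum r (Pow N)"
  proof -
    have "(\<Sum>j\<in>N. johnston_raw n v j) = johnston_raw n v i + (\<Sum>j\<in>N-{i}. johnston_raw n v j)"
      using sum.remove[OF fN iN] by blast
    also have "(\<Sum>j\<in>N-{i}. johnston_raw n v j) = sum r (Pow N)"
      unfolding raw r_def by (rule sum.swap)
    finally show ?thesis unfolding raw a_def by simp
  qed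
  have a0: "a T \<ge> 0" for T unfolding a_def C_def by simp
  have r0: "r T \<ge> 0" for T unfolding r_def C_def by (intro sum_nonneg) simp
  have ar1: "a T + r T = 1" if "T \<subseteq> N" "num_critical v T > 0" for T
  proof -
    have "a T + r T = (\<Sum>j\<in>N. if critical v T j then 1 / C T else 0)"
      unfolding a_def r_def using sum.remove[OF fN iN, of "\<lambda>j. if critical v T j then 1 / C T else 0"] by simp
    also have "\<dots> = (\<Sum>j\<in>{j\<in>N. critical v T j}. 1 / C T)"
      by (rule sum.inter_filter[OF fN, symmetric])
    also have "{j\<in>N. critical v T j} = {j\<in>T. critical v T j}" using that(1) unfolding critical_def by auto
    also have "(\<Sum>j\<in>{j\<in>T. critical v T j}. 1 / C T) = 1"
      using that(2) unfolding C_def num_critical_def by simp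
    finally show ?thesis .
  qed
  have nocrit: "a T = 0 \<and> r T = 0" if "\<And>j. \<not> critical v T j" for T
    unfolding a_def r_def using that by simp
  have minW: "num_critical v W = card W \<and> W \<noteq> {}"
    if "W \<subseteq> N" "v W = 1" "\<forall>j\<in>W. v (W - {j}) = 0" for W
  proof -
    have "{j\<in>W. critical v W j} = W" using that unfolding critical_def by auto
    thus ?thesis using that v0 unfolding num_critical_def by auto
  qed
  define A where "A = {T \<in> Pow N. critical v T i}"
  define B where "B = {T \<in> Pow N. i \<in> T}"
  have cardB: "card B = 2 ^ (n - 1)"
  proof -
    have "B = insert i ` Pow (N - {i})"
    proof (intro equalityI subsetI)
      fix T assume "T \<in> B"
      hence T: "T \<subseteq> N" "i \<in> T" unfolding B_def by auto
      hence "T = insert i (T - {i})" "T - {i} \<in> Pow (N - {i})" by auto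
      thus "T \<in> insert i ` Pow (N - {i})" by (metis image_eqI)
    next
      fix T assume "T \<in> insert i ` Pow (N - {i})"
      then obtain X where "X \<subseteq> N - {i}" "T = insert i X" by auto
      thus "T \<in> B" unfolding B_def using iN by auto
    qed
    moreover have "inj_on (insert i) (Pow (N - {i}))" unfolding inj_on_def by blast
    ultimately have "card B = card (Pow (N - {i}))" by (simp add: card_image)
    thus ?thesis using fN iN cN by (simp add: card_Pow)
  qed
  have AB: "A \<subseteq> B" unfolding A_def B_def critical_def by auto
  have AneB: "A \<noteq> B"
  proof
    assume eq: "A = B"
    have sw: "v T = 1 \<and> v (T - {i}) = 0" if "T \<subseteq> N" "i \<in> T" for T
      using that eq unfolding A_def B_def critical_def by blast
    have vi: "v S = (if i \<in> S then 1 else 0)" if "S \<subseteq> N" for S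
    proof (cases "i \<in> S")
      case True thus ?thesis using sw that by simp
    next
      case False
      have "insert i S - {i} = S" using False by auto
      thus ?thesis using sw[of "insert i S"] that iN False by auto
    qed
    have "dictator n v i"
      unfolding dictator_def null_player_def
    proof (intro conjI ballI allI impI)
      show "v {i} = 1" using vi[of "{i}"] iN by simp
    next
      fix j S assume j: "j \<in> players n - {i}" and S: "S \<subseteq> players n - {j}"
      have "S \<subseteq> N" "S \<union> {j} \<subseteq> N" using S j N_def by auto
      thus "v S = v (S \<union> {j})" using vi j by simp
    qed
    thus False using assms(4) by simp
  qed
  have cardA: "real (card A) \<le> M - 1"
  proof -
    have "card A < card B" using AB AneB fN unfolding B_def by (intro psubset_card_mono) auto
    hence "card A + 1 \<le> (2::nat) ^ (n - 1)" using cardB by simp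
    hence "real (card A + 1) \<le> real ((2::nat) ^ (n - 1))" by (simp only: of_nat_le_iff)
    thus ?thesis unfolding M_def by simp
  qed
  have suma: "sum a (Pow N) \<le> M - 1"
  proof -
    have "sum a (Pow N) \<le> (\<Sum>T\<in>Pow N. if T \<in> A then 1 else 0)"
    proof (rule sum_mono)
      fix T assume T: "T \<in> Pow N"
      show "a T \<le> (if T \<in> A then 1 else 0)"
      proof (cases "critical v T i")
        case True
        have "T \<subseteq> N" using T by simp
        hence "finite T" using fN finite_subset by blast
        hence "finite {j\<in>T. critical v T j}" by simp
        moreover have "i \<in> {j\<in>T. critical v T j}" using True unfolding critical_def by simp
        ultimately have "card {j\<in>T. critical v T j} > 0" using card_gt_0_iff by blast
        hence "num_critical v T \<ge> 1" unfolding num_critical_def by simp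
        thus ?thesis using True T unfolding a_def A_def C_def by simp
      next
        case False thus ?thesis unfolding a_def A_def by simp
      qed
    qed
    also have "\<dots> = real (card A)" using fN unfolding A_def
      by (simp add: sum.If_cases Int_def)
    finally show ?thesis using cardA by simp
  qed
  have key: "sum a (Pow N) \<le> (M - 1) * sum r (Pow N)"
  proof -
    have caseR: ?thesis if "sum r (Pow N) \<ge> 1"
    proof -
      have "M - 1 \<le> (M - 1) * sum r (Pow N)" using that M2 by simp
      thus ?thesis using suma by linarith
    qed
    have casePW: ?thesis if "\<And>T. T \<in> Pow N \<Longrightarrow> a T \<le> (M - 1) * r T"
    proof -
      have "sum a (Pow N) \<le> (\<Sum>T\<in>Pow N. (M - 1) * r T)" using that by (rule sum_mono)
      thus ?thesis by (simp add: sum_distrib_left)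
    qed
    have two: "sum r (Pow N) \<ge> 1" if "T1 \<in> Pow N" "T2 \<in> Pow N" "T1 \<noteq> T2" "r T1 \<ge> 1/2" "r T2 \<ge> 1/2" for T1 T2
    proof -
      have "sum r {T1, T2} \<le> sum r (Pow N)" using that fN r0 by (intro sum_mono2) auto
      thus ?thesis using that by simp
    qed
    show ?thesis
    proof (cases "v {i} = 1")
      case True
      obtain j where j: "j \<in> players n - {i}" "\<not> null_player n v j" using assms(4) True unfolding dictator_def by blast
      obtain S where S: "S \<subseteq> N - {j}" "v S \<noteq> v (S \<union> {j})" using j(2) unfolding null_player_def N_def by blast
      have jN: "j \<in> N" "j \<noteq> i" using j N_def by auto
      have "S \<union> {j} \<subseteq> N" using S jN by auto
      hence "v S \<le> v (S \<union> {j})" using mono[of S "S \<union> {j}"] by auto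
      moreover have "v S \<in> {0,1}" using val S by auto
      moreover have "v (S \<union> {j}) \<in> {0,1}" using val \<open>S \<union> {j} \<subseteq> N\<close> by blast
      ultimately have vS: "v S = 0" "v (S \<union> {j}) = 1" using S by auto
      have iS: "i \<notin> S" using mono[of "{i}" S] S vS True by auto
      define T1 where "T1 = S \<union> {j}"
      have T1N: "T1 \<subseteq> N" using S jN T1_def by auto
      have "T1 - {j} = S" using S T1_def by auto
      hence cj: "critical v T1 j" unfolding critical_def T1_def using vS by (simp add: T1_def)
      have ci: "\<not> critical v T1 i" unfolding critical_def T1_def using iS jN by auto
      have "num_critical v T1 > 0"
      proof -
        have "finite T1" using T1N fN finite_subset by blast
        moreover have "j \<in> {x\<in>T1. critical v T1 x}" using cj unfolding critical_def by auto
        moreover have "finite {x\<in>T1. critical v T1 x}" using \<open>finite T1\<close> by simp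
        ultimately have "card {x\<in>T1. critical v T1 x} > 0" using card_gt_0_iff by blast
        thus ?thesis unfolding num_critical_def .
      qed
      hence "r T1 = 1" using ar1[OF T1N] ci unfolding a_def by simp
      hence "sum r (Pow N) \<ge> 1" using sum_mono2[of "Pow N" "{T1}" r] fN T1N r0 by auto
      thus ?thesis by (rule caseR)
    next
      case False
      hence vi0: "v {i} = 0" using val[of "{i}"] iN by auto
      have half: "r W \<ge> 1/2" if W: "W \<subseteq> N" "v W = 1" "\<forall>j\<in>W. v (W - {j}) = 0" for W
      proof -
        have mw: "num_critical v W = card W" "W \<noteq> {}" using minW[OF W] by auto
        have fW: "finite W" using W fN finite_subset by blast
        have "num_critical v W > 0" using mw fW by (simp add: card_gt_0_iff)
        hence ar: "a W + r W = 1" using ar1[OF W(1)] by blast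
        show ?thesis
        proof (cases "i \<in> W")
          case True
          have "W \<noteq> {i}" using vi0 W by auto
          hence "card W \<ge> 2" using card2[OF fW True] by blast
          moreover have "a W = 1 / real (card W)" using True W unfolding a_def C_def critical_def mw(1)[symmetric] by simp
          ultimately have "a W \<le> 1/2" using half_bound by simp
          thus ?thesis using ar by linarith
        next
          case False
          hence "a W = 0" unfolding a_def critical_def by simp
          thus ?thesis using ar by simp
        qed
      qed
      obtain W where W: "W \<subseteq> N" "v W = 1" "\<forall>j\<in>W. v (W - {j}) = 0"
        using minimal_winning[of N v] fN vN val by blast
      show ?thesis
      proof (cases "\<exists>S. S \<subseteq> N \<and> v S = 1 \<and> \<not> W \<subseteq> S")
        case True
        then obtain S where S: "S \<subseteq> N" "v S = 1" "\<not> W \<subseteq> S" by blast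
        obtain W2 where W2: "W2 \<subseteq> S" "v W2 = 1" "\<forall>j\<in>W2. v (W2 - {j}) = 0"
          using minimal_winning[of S v] S fN val finite_subset by (metis subset_trans)
        have W2N: "W2 \<subseteq> N" using W2 S by auto
        have "W \<noteq> W2" using W2 S by auto
        hence "sum r (Pow N) \<ge> 1" using two[of W W2] half[OF W] half[OF W2N W2(2,3)] W W2N by auto
        thus ?thesis by (rule caseR)
      next
        case False
        hence un: "\<And>S. S \<subseteq> N \<Longrightarrow> v S = 1 \<Longrightarrow> W \<subseteq> S" by blast
        have mw: "num_critical v W = card W" "W \<noteq> {}" using minW[OF W] by auto
        have fW: "finite W" using W fN finite_subset by blast
        show ?thesis
        proof (rule casePW)
          fix T assume T: "T \<in> Pow N"
          show "a T \<le> (M - 1) * r T"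
          proof (cases "v T = 1")
            case False
            hence "\<And>j. \<not> critical v T j" unfolding critical_def by simp
            thus ?thesis using nocrit by simp
          next
            case True
            have WT: "W \<subseteq> T" using un T True by auto
            have cr: "critical v T j \<longleftrightarrow> j \<in> W" for j
            proof
              assume c: "critical v T j"
              show "j \<in> W"
              proof (rule ccontr)
                assume "j \<notin> W"
                hence "W \<subseteq> T - {j}" using WT by auto
                hence "v W \<le> v (T - {j})" using mono T by auto
                thus False using c W unfolding critical_def by simp
              qed
            next
              assume jW: "j \<in> W"
              have "v (T - {j}) \<noteq> 1" using un[of "T - {j}"] T jW by auto
              hence "v (T - {j}) = 0" using val[of "T - {j}"] T by auto
              thus "critical v T j" unfolding critical_def using jW WT True by auto
            qed
            have "{j\<in>T. critical v T j} = W" using cr WT by auto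
            hence nc: "num_critical v T = card W" unfolding num_critical_def by simp
            hence pos: "num_critical v T > 0" using mw fW by (simp add: card_gt_0_iff)
            have ar: "a T + r T = 1" using ar1 T pos by auto
            show ?thesis
            proof (cases "i \<in> W")
              case False
              hence "a T = 0" unfolding a_def using cr by simp
              thus ?thesis using r0[of T] M2 by simp
            next
              case iW: True
              have "W \<noteq> {i}" using vi0 W by auto
              hence c2: "card W \<ge> 2" using card2[OF fW iW] by blast
              have aT: "a T = 1 / real (card W)" using iW cr unfolding a_def C_def nc by simp
              hence "a T \<le> 1/2" using c2 half_bound by simp
              hence "a T \<le> r T" using ar by linarith
              moreover have "r T \<le> (M - 1) * r T" using r0[of T] M2
                using mult_right_mono[of 1 "M - 1" "r T"] by simp
              ultimately show ?thesis by linarith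
            qed
          qed
        qed
      qed
    qed
  qed
  have J: "johnston n v i = sum a (Pow N) / (sum a (Pow N) + sum r (Pow N))"
    unfolding johnston_def using tot raw[of i] unfolding a_def N_def by simp
  have sa0: "sum a (Pow N) \<ge> 0" and sr0: "sum r (Pow N) \<ge> 0" using a0 r0 by (auto intro: sum_nonneg)
  show ?thesis
  proof (cases "sum a (Pow N) + sum r (Pow N) = 0")
    case True
    hence "johnston n v i = 0" using J by simp
    thus ?thesis using M2 unfolding M_def[symmetric] by simp
  next
    case False
    hence pos: "sum a (Pow N) + sum r (Pow N) > 0" using sa0 sr0 by linarith
    have "sum a (Pow N) * M \<le> (M - 1) * (sum a (Pow N) + sum r (Pow N))"
      using key by (simp add: algebra_simps)
    hence "sum a (Pow N) / (sum a (Pow N) + sum r (Pow N)) \<le> (M - 1) / M"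
      using pos M2 by (simp add: divide_simps)
    thus ?thesis using J unfolding M_def by simp
  qed
qed

end
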